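(* Let $P$ be a finite bounded graded poset with rank function $\operatorname{rk}$ and $H=\operatorname{rk}(\hat{1})$, which admits an $R$-labelling. Then the $q$-Zeta volume of $\mathsf{Z}_{P,\operatorname{rk}}$ (the coefficient of $x^H$ in $\mathsf{Z}_{P,\operatorname{rk}}(x)$ multiplied by $[H]!_q$) is a non-negative $q$-analogue of the number of maximal chains of $P$, i.e. it is a polynomial in $q$ with non-negative integer coefficients whose value at $q=1$ is the number of maximal chains of $P$.
   Context: $q$ is an indeterminate; $[n]_q=(q^n-1)/(q-1)$, $[n]!_q=[1]_q\cdots[n]_q$. $\operatorname{rk}$ is the rank function of the graded poset (increasing by $1$ along covers, value $0$ at $\hat{0}$). The $q$-Zeta polynomial $\mathsf{Z}_{P,h}\in\mathbb{Q}(q)[x]$ of a finite poset with height function $h$ ($h(x)<h(y)$ when $y$ covers $x$) is the unique polynomial with $\mathsf{Z}_{P,h}([n]_q)=\sum_{e_1\le\cdots\le e_{n-1}\text{ in }P}q^{h(e_1)+\cdots+h(e_{n-1})}$ for all $n\ge2$; it has degree $\max h$. $R$-labelling: for a set $L$ with an arbitrary relation $\lhd$, a map $\lambda$ from cover relations of $P$ to $L$ such that for all $p\le p'$ there is exactly one maximal chain $p=e_0<\cdots<e_{m+1}=p'$ with $\lambda(e_{i-1},e_i)\lhd\lambda(e_i,e_{i+1})$ for all $1\le i\le m$. *)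

theory Defs
  imports "HOL-Computational_Algebra.Polynomial" "HOL-Computational_Algebra.Fraction_Field"
begin

type_synonym ratfun = "rat poly fract"

definition qvar :: ratfun where
  "qvar = Fract [:0, 1:] 1"

definition ratfun_of_poly :: "rat poly \<Rightarrow> ratfun" where
  "ratfun_of_poly p = Fract p 1"

definition qint :: "nat \<Rightarrow> ratfun" where
  "qint n = (qvar ^ n - 1) / (qvar - 1)"

definition qfact :: "nat \<Rightarrow> ratfun" where
  "qfact n = (\<Prod>i=1..n. qint i)"

definition covers :: "'a::order set \<Rightarrow> 'a \<Rightarrow> 'a \<Rightarrow> bool" where
  "covers P x y \<longleftrightarrow> x \<in> P \<and> y \<in> P \<and> x < y \<and> \<not> (\<exists>z\<in>P. x < z \<and> z < y)"

definition multichains :: "'a::order set \<Rightarrow> nat \<Rightarrow> 'a list set" where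
  "multichains P k = {es. length es = k \<and> set es \<subseteq> P \<and> sorted_wrt (\<le>) es}"

definition qZeta :: "'a::order set \<Rightarrow> ('a \<Rightarrow> nat) \<Rightarrow> ratfun poly" where
  "qZeta P h = (THE Z. \<forall>n\<ge>2. poly Z (qint n) =
      (\<Sum>es\<in>multichains P (n - 1). qvar ^ (\<Sum>e\<leftarrow>es. h e)))"

definition sat_chain :: "'a::order set \<Rightarrow> 'a \<Rightarrow> 'a \<Rightarrow> 'a list \<Rightarrow> bool" where
  "sat_chain P p p' es \<longleftrightarrow> es \<noteq> [] \<and> hd es = p \<and> last es = p' \<and>
      (\<forall>i. Suc i < length es \<longrightarrow> covers P (es ! i) (es ! Suc i))"

(* R-labelling with labels in a type 'b (label set L = UNIV) and arbitrary relation lhd *)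
definition R_labelling :: "'a::order set \<Rightarrow> ('b \<Rightarrow> 'b \<Rightarrow> bool) \<Rightarrow> ('a \<Rightarrow> 'a \<Rightarrow> 'b) \<Rightarrow> bool" where
  "R_labelling P lhd lam \<longleftrightarrow>
     (\<forall>p\<in>P. \<forall>p'\<in>P. p \<le> p' \<longrightarrow>
        (\<exists>!es. sat_chain P p p' es \<and>
           (\<forall>i. i + 2 < length es \<longrightarrow>
               lhd (lam (es ! i) (es ! (i + 1))) (lam (es ! (i + 1)) (es ! (i + 2))))))"

definition maximal_chain :: "'a::order set \<Rightarrow> 'a set \<Rightarrow> bool" where
  "maximal_chain P C \<longleftrightarrow> C \<subseteq> P \<and> Complete_Partial_Order.chain (\<le>) C \<and>
     \<not> (\<exists>D. D \<subseteq> P \<and> Complete_Partial_Order.chain (\<le>) D \<and> C \<subset> D)"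

end

theory Submission
  imports Defs "HOL-Library.Multiset"
begin

fun incr :: "('b \<Rightarrow> 'b \<Rightarrow> bool) \<Rightarrow> ('a \<Rightarrow> 'a \<Rightarrow> 'b) \<Rightarrow> 'a set \<Rightarrow> 'a list \<Rightarrow> bool" where
  "incr lhd lam S (x # y # z # r) = ((y \<in> S \<or> lhd (lam x y) (lam y z)) \<and> incr lhd lam S (y # z # r))"
| "incr lhd lam S _ = True"

lemma incr_nth:
  "incr lhd lam S m \<longleftrightarrow> (\<forall>i. i + 2 < length m \<longrightarrow>
     m ! (i + 1) \<in> S \<or> lhd (lam (m ! i) (m ! (i + 1))) (lam (m ! (i + 1)) (m ! (i + 2))))"
proof (induction lhd lam S m rule: incr.induct)
  case (1 lhd lam S x y z r)
  show ?case
  proof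
    assume a: "incr lhd lam S (x # y # z # r)"
    show "\<forall>i. i + 2 < length (x # y # z # r) \<longrightarrow>
     (x # y # z # r) ! (i + 1) \<in> S \<or> lhd (lam ((x # y # z # r) ! i) ((x # y # z # r) ! (i + 1))) (lam ((x # y # z # r) ! (i + 1)) ((x # y # z # r) ! (i + 2)))"
    proof (intro allI impI)
      fix i assume i: "i + 2 < length (x # y # z # r)"
      show "(x # y # z # r) ! (i + 1) \<in> S \<or> lhd (lam ((x # y # z # r) ! i) ((x # y # z # r) ! (i + 1))) (lam ((x # y # z # r) ! (i + 1)) ((x # y # z # r) ! (i + 2)))"
      proof (cases i)
        case 0
        then show ?thesis using a by simp
      next
        case (Suc i')
        then show ?thesis using a i 1 by (simp add: numeral_2_eq_2)
      qed
    qed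
  next
    assume a: "\<forall>i. i + 2 < length (x # y # z # r) \<longrightarrow>
     (x # y # z # r) ! (i + 1) \<in> S \<or> lhd (lam ((x # y # z # r) ! i) ((x # y # z # r) ! (i + 1))) (lam ((x # y # z # r) ! (i + 1)) ((x # y # z # r) ! (i + 2)))"
    have h0: "y \<in> S \<or> lhd (lam x y) (lam y z)" using a[rule_format, of 0] by simp
    have "\<forall>i. i + 2 < length (y # z # r) \<longrightarrow>
     (y # z # r) ! (i + 1) \<in> S \<or> lhd (lam ((y # z # r) ! i) ((y # z # r) ! (i + 1))) (lam ((y # z # r) ! (i + 1)) ((y # z # r) ! (i + 2)))"
    proof (intro allI impI)
      fix i assume "i + 2 < length (y # z # r)"
      then show "(y # z # r) ! (i + 1) \<in> S \<or> lhd (lam ((y # z # r) ! i) ((y # z # r) ! (i + 1))) (lam ((y # z # r) ! (i + 1)) ((y # z # r) ! (i + 2)))"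
        using a[rule_format, of "Suc i"] by (simp add: numeral_2_eq_2)
    qed
    then show "incr lhd lam S (x # y # z # r)" using h0 1 by simp
  qed
qed auto

lemma incr_append:
  assumes "e \<in> S" "incr lhd lam S (xs @ [e])" "incr lhd lam S (e # ys)"
  shows "incr lhd lam S (xs @ e # ys)"
  using assms
proof (induction xs rule: induct_list012)
  case 1
  then show ?case by simp
next
  case (2 x)
  then show ?case by (cases ys) auto
next
  case (3 x y zs)
  then show ?case by (cases zs) auto
qed

lemma incr_take: "incr lhd lam S m \<Longrightarrow> incr lhd lam S (take k m)"
  unfolding incr_nth by auto

lemma incr_drop: "incr lhd lam S m \<Longrightarrow> incr lhd lam S (drop k m)"
  unfolding incr_nth by (auto simp: add.commute add.left_commute)

lemma incr_mono:
  "incr lhd lam S m \<Longrightarrow> (\<forall>y\<in>set (butlast (tl m)). y \<in> S \<longrightarrow> y \<in> S') \<Longrightarrow> incr lhd lam S' m"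
  by (induction lhd lam S m rule: incr.induct) auto

lemma sat_chain_iff:
  "sat_chain P p p' es \<longleftrightarrow> es \<noteq> [] \<and> hd es = p \<and> last es = p' \<and> successively (covers P) es"
  unfolding sat_chain_def successively_conv_nth by simp

lemma sc_take:
  assumes "sat_chain P p p' m" "j < length m"
  shows "sat_chain P p (m ! j) (take (Suc j) m)"
  using assms unfolding sat_chain_def
  apply (auto simp: hd_conv_nth last_conv_nth min_def)
  apply (subgoal_tac "length m - Suc 0 = j")
   apply simp
  apply linarith
  done

lemma sc_drop:
  assumes "sat_chain P p p' m" "j < length m"
  shows "sat_chain P (m ! j) p' (drop j m)"
  using assms unfolding sat_chain_def
  by (auto simp: hd_drop_conv_nth add.commute add.left_commute)



locale rp =
  fixes P :: "'a::order set" and bot top :: 'a and rk :: "'a \<Rightarrow> nat"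
    and lhd :: "'b \<Rightarrow> 'b \<Rightarrow> bool" and lam :: "'a \<Rightarrow> 'a \<Rightarrow> 'b"
  assumes fin: "finite P"
    and bot_in: "bot \<in> P" and bot_le: "\<forall>x\<in>P. bot \<le> x"
    and top_in: "top \<in> P" and top_ge: "\<forall>x\<in>P. x \<le> top"
    and rk0: "rk bot = 0"
    and rk_cov: "\<forall>x y. covers P x y \<longrightarrow> rk y = rk x + 1"
    and R: "R_labelling P lhd lam"
begin

abbreviation inc where "inc \<equiv> incr lhd lam"

lemma R_ex1: "p \<in> P \<Longrightarrow> p' \<in> P \<Longrightarrow> p \<le> p' \<Longrightarrow> \<exists>!m. sat_chain P p p' m \<and> inc {} m"
  using R unfolding R_labelling_def incr_nth by simp

lemma sc_in:
  assumes "sat_chain P p p' m" "p \<in> P"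
  shows "set m \<subseteq> P"
proof
  fix x assume "x \<in> set m"
  then obtain i where i: "i < length m" "x = m ! i" by (auto simp: in_set_conv_nth)
  show "x \<in> P"
  proof (cases i)
    case 0
    then show ?thesis using assms i by (auto simp: sat_chain_def hd_conv_nth)
  next
    case (Suc i')
    then have "covers P (m ! i') (m ! i)" using assms i by (auto simp: sat_chain_def)
    then show ?thesis using i by (simp add: covers_def)
  qed
qed

lemma sc_rk:
  assumes "sat_chain P p p' m" "i < length m"
  shows "rk (m ! i) = rk p + i"
  using assms(2)
proof (induction i)
  case 0
  then show ?case using assms(1) by (auto simp: sat_chain_def hd_conv_nth)
next
  case (Suc i)
  then have "covers P (m ! i) (m ! Suc i)" using assms(1) by (auto simp: sat_chain_def)
  then show ?case using Suc rk_cov by simp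
qed

lemma sc_last_rk:
  assumes "sat_chain P p p' m"
  shows "rk p' = rk p + (length m - 1)"
proof -
  have "m \<noteq> []" "last m = p'" using assms by (auto simp: sat_chain_def)
  then show ?thesis using sc_rk[OF assms, of "length m - 1"] by (simp add: last_conv_nth)
qed

lemma sc_sorted:
  assumes "sat_chain P p p' m"
  shows "sorted_wrt (<) m"
proof -
  have "successively (covers P) m" using assms by (simp add: sat_chain_iff)
  then have "successively (<) m" by (rule successively_mono) (auto simp: covers_def)
  then show ?thesis by (simp add: successively_conv_sorted_wrt)
qed

lemma sc_le:
  assumes "sat_chain P p p' m" "i \<le> j" "j < length m"
  shows "m ! i \<le> m ! j"
  using sc_sorted[OF assms(1)] assms(2,3)
  by (cases "i = j") (auto simp: sorted_wrt_iff_nth_less intro: less_imp_le)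

lemma rk_mono: "p \<in> P \<Longrightarrow> p' \<in> P \<Longrightarrow> p \<le> p' \<Longrightarrow> rk p \<le> rk p'"
  using R_ex1 sc_last_rk by fastforce

lemma rk_less:
  assumes "p \<in> P" "p' \<in> P" "p < p'"
  shows "rk p < rk p'"
proof -
  obtain m where m: "sat_chain P p p' m" using R_ex1[of p p'] assms less_imp_le by blast
  have "length m \<noteq> 1"
  proof
    assume "length m = 1"
    then have "hd m = last m" by (cases m) auto
    then show False using m assms by (auto simp: sat_chain_def)
  qed
  moreover have "m \<noteq> []" using m by (auto simp: sat_chain_def)
  ultimately show ?thesis using sc_last_rk[OF m] by (cases m) auto
qed

end



lemma set_butlast_tl: "set (butlast (tl xs)) \<subseteq> set (butlast xs)"
  by (cases xs) (auto simp: butlast.simps dest: in_set_butlastD)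

context rp
begin

lemma decomp:
  "sorted_wrt (\<le>) c \<Longrightarrow> p \<in> P \<Longrightarrow> p' \<in> P \<Longrightarrow> p \<le> p' \<Longrightarrow>
   \<forall>x\<in>set c. x \<in> P \<and> p \<le> x \<and> x \<le> p' \<Longrightarrow>
   \<exists>!m. sat_chain P p p' m \<and> set c \<subseteq> set m \<and> inc (set c) m"
proof (induction c arbitrary: p)
  case Nil
  then show ?case using R_ex1 by simp
next
  case (Cons e c)
  have e: "e \<in> P" "p \<le> e" "e \<le> p'" using Cons.prems by auto
  have ce: "\<forall>x\<in>set c. e \<le> x" using Cons.prems by auto
  obtain m1 where m1: "sat_chain P p e m1" "inc {} m1"
    and u1: "\<And>m. sat_chain P p e m \<Longrightarrow> inc {} m \<Longrightarrow> m = m1"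
    using R_ex1[of p e] e Cons.prems by blast
  have "\<exists>!m. sat_chain P e p' m \<and> set c \<subseteq> set m \<and> inc (set c) m"
    using Cons.prems e ce by (intro Cons.IH) auto
  then obtain m2 where m2: "sat_chain P e p' m2" "set c \<subseteq> set m2" "inc (set c) m2"
    and u2: "\<And>m. sat_chain P e p' m \<Longrightarrow> set c \<subseteq> set m \<Longrightarrow> inc (set c) m \<Longrightarrow> m = m2"
    by blast
  let ?S = "set (e # c)"
  define xs where "xs = butlast m1"
  define ys where "ys = tl m2"
  have m1e: "m1 = xs @ [e]" using m1 unfolding xs_def sat_chain_def by (metis append_butlast_last_id)
  have m2e: "m2 = e # ys" using m2 unfolding ys_def sat_chain_def by (cases m2) auto
  have ex: "sat_chain P p p' (xs @ e # ys) \<and> ?S \<subseteq> set (xs @ e # ys) \<and> inc ?S (xs @ e # ys)"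
  proof (intro conjI)
    have s1: "successively (covers P) (xs @ [e])" "hd (xs @ [e]) = p"
      using m1 m1e by (auto simp: sat_chain_iff)
    have s2: "successively (covers P) (e # ys)" "last (e # ys) = p'"
      using m2 m2e by (auto simp: sat_chain_iff)
    show "sat_chain P p p' (xs @ e # ys)"
      unfolding sat_chain_iff using s1 s2
      by (cases "xs = []") (auto simp: successively_append_iff)
    show "?S \<subseteq> set (xs @ e # ys)" using m2 m2e by auto
    show "inc ?S (xs @ e # ys)"
    proof (rule incr_append)
      show "inc ?S (xs @ [e])" using m1 m1e by (auto intro: incr_mono)
      show "inc ?S (e # ys)" using m2 m2e by (auto intro: incr_mono)
    qed simp
  qed
  have un: "m = xs @ e # ys" if U: "sat_chain P p p' m" "?S \<subseteq> set m" "inc ?S m" for m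
  proof -
    have srt: "sorted_wrt (<) m" using sc_sorted U by blast
    obtain j where j: "j < length m" "m ! j = e" using U by (auto simp: in_set_conv_nth)
    have lt: "y < e" if yin: "y \<in> set (take j m)" for y
    proof -
      obtain i where i: "i < length (take j m)" "take j m ! i = y" using yin by (auto simp: in_set_conv_nth)
      then have "i < j" "y = m ! i" by auto
      then show ?thesis using sorted_wrt_nth_less[OF srt \<open>i < j\<close> j(1)] j(2) by simp
    qed
    have gt: "e < y" if yin: "y \<in> set (drop (Suc j) m)" for y
    proof -
      obtain i where i: "i < length (drop (Suc j) m)" "drop (Suc j) m ! i = y" using yin by (auto simp: in_set_conv_nth)
      then have "j < Suc j + i" "Suc j + i < length m" "y = m ! (Suc j + i)" by auto
      then show ?thesis using sorted_wrt_nth_less[OF srt \<open>j < Suc j + i\<close>] j(2) by simp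
    qed
    define t where "t = take (Suc j) m"
    have t1: "sat_chain P p e t" unfolding t_def using sc_take[OF U(1) j(1)] j by simp
    have bt: "butlast t = take j m" unfolding t_def using j by (simp add: butlast_take)
    have "inc ?S t" unfolding t_def using U(3) by (rule incr_take)
    moreover have "\<forall>y\<in>set (butlast (tl t)). y \<in> ?S \<longrightarrow> y \<in> {}"
    proof (intro ballI impI)
      fix y assume y: "y \<in> set (butlast (tl t))" "y \<in> ?S"
      then have "y \<in> set (take j m)" using set_butlast_tl[of t] bt by auto
      then have "y < e" by (rule lt)
      moreover have "e \<le> y" using y(2) ce by auto
      ultimately show "y \<in> {}" by simp
    qed
    ultimately have "inc {} t" by (rule incr_mono)
    then have tm1: "t = m1" using u1 t1 by blast
    define d where "d = drop j m"
    have d1: "sat_chain P e p' d" unfolding d_def using sc_drop[OF U(1) j(1)] j by simp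
    have td: "tl d = drop (Suc j) m" unfolding d_def by (simp add: drop_Suc tl_drop)
    have "inc ?S d" unfolding d_def using U(3) by (rule incr_drop)
    moreover have "\<forall>y\<in>set (butlast (tl d)). y \<in> ?S \<longrightarrow> y \<in> set c"
    proof (intro ballI impI)
      fix y assume y: "y \<in> set (butlast (tl d))" "y \<in> ?S"
      then have "e < y" using gt td by (auto dest: in_set_butlastD)
      then show "y \<in> set c" using y(2) by auto
    qed
    ultimately have incd: "inc (set c) d" by (rule incr_mono)
    have "set c \<subseteq> set d"
    proof
      fix x assume x: "x \<in> set c"
      then have "x \<in> set m" "e \<le> x" using U(2) ce by auto
      moreover have "x \<notin> set (take j m)" using lt \<open>e \<le> x\<close> by fastforce
      ultimately show "x \<in> set d" unfolding d_def
        by (metis Un_iff append_take_drop_id set_append)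
    qed
    then have dm2: "d = m2" using u2 d1 incd by blast
    have "m = take j m @ drop j m" by simp
    also have "\<dots> = butlast m1 @ m2" using bt tm1 dm2 d_def by simp
    finally show ?thesis unfolding xs_def m2e by simp
  qed
  show ?case using ex un by blast
qed

end


context rp
begin

definition Ch where "Ch = {m. sat_chain P bot top m}"

lemma Ch_len: "m \<in> Ch \<Longrightarrow> length m = rk top + 1"
  unfolding Ch_def using sc_last_rk rk0 by (fastforce simp: sat_chain_def)

lemma Ch_rk: "m \<in> Ch \<Longrightarrow> i < length m \<Longrightarrow> rk (m ! i) = i"
  unfolding Ch_def using sc_rk rk0 by fastforce

lemma Ch_sub: "m \<in> Ch \<Longrightarrow> set m \<subseteq> P"
  unfolding Ch_def using sc_in bot_in by blast

lemma Ch_nth_rk: "m \<in> Ch \<Longrightarrow> x \<in> set m \<Longrightarrow> m ! (rk x) = x"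
  by (metis Ch_rk in_set_conv_nth)

lemma Ch_rk_le: "m \<in> Ch \<Longrightarrow> x \<in> set m \<Longrightarrow> rk x \<le> rk top"
  by (metis Ch_len Ch_rk in_set_conv_nth less_Suc_eq_le Suc_eq_plus1)

lemma Ch_distinct: "m \<in> Ch \<Longrightarrow> distinct m"
  unfolding distinct_conv_nth by (metis Ch_rk)

lemma Ch_card: "m \<in> Ch \<Longrightarrow> card (set m) = rk top + 1"
  using Ch_distinct Ch_len distinct_card by metis

lemma Ch_mono: "m \<in> Ch \<Longrightarrow> i \<le> j \<Longrightarrow> j < length m \<Longrightarrow> m ! i \<le> m ! j"
  unfolding Ch_def using sc_le by blast

lemma finite_Ch: "finite Ch"
proof -
  have "Ch \<subseteq> {xs. set xs \<subseteq> P \<and> length xs = rk top + 1}"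
    using Ch_sub Ch_len by auto
  moreover have "finite {xs. set xs \<subseteq> P \<and> length xs = rk top + 1}"
    using fin by (rule finite_lists_length_eq)
  ultimately show ?thesis by (rule finite_subset)
qed

lemma inj_set_Ch: "inj_on set Ch"
proof
  fix m m' assume m: "m \<in> Ch" "m' \<in> Ch" "set m = set m'"
  show "m = m'"
  proof (rule nth_equalityI)
    show "length m = length m'" using m Ch_len by simp
    fix i assume i: "i < length m"
    then have "m ! i \<in> set m'" using m by auto
    then have "m' ! (rk (m ! i)) = m ! i" using m Ch_nth_rk by blast
    then show "m ! i = m' ! i" using Ch_rk[OF m(1) i] by simp
  qed
qed

lemma chain_list:
  assumes C: "C \<subseteq> P" "Complete_Partial_Order.chain (\<le>) C"
  shows "\<exists>c. sorted_wrt (\<le>) c \<and> set c = C"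
proof -
  have uq: "x = y" if "x \<in> C" "y \<in> C" "rk x = rk y" for x y
  proof -
    have "x \<le> y \<or> y \<le> x" using C that by (auto simp: chain_def)
    then show ?thesis using rk_less[of x y] rk_less[of y x] that C
      by (metis less_irrefl order.not_eq_order_implies_strict subsetD)
  qed
  define g where "g n = (THE x. x \<in> C \<and> rk x = n)" for n
  have g: "g (rk x) = x" if "x \<in> C" for x
    unfolding g_def using uq that by blast
  have fC: "finite C" using C fin finite_subset by blast
  define c where "c = map g (sorted_list_of_set (rk ` C))"
  have "set c = g ` rk ` C" unfolding c_def using fC by simp
  also have "\<dots> = C" using g by force
  finally have sc: "set c = C" .
  have "sorted_wrt (<) (sorted_list_of_set (rk ` C))" by simp
  then have "sorted_wrt (\<lambda>a b. g a \<le> g b) (sorted_list_of_set (rk ` C))"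
  proof (rule sorted_wrt_mono_rel[rotated])
    fix a b assume ab: "a \<in> set (sorted_list_of_set (rk ` C))" "b \<in> set (sorted_list_of_set (rk ` C))" "a < b"
    then obtain x y where xy: "x \<in> C" "y \<in> C" "a = rk x" "b = rk y" using fC by auto
    have "x \<le> y \<or> y \<le> x" using C xy by (auto simp: chain_def)
    moreover have "\<not> y \<le> x" using rk_mono[of y x] xy C ab by auto
    ultimately show "g a \<le> g b" using g xy by auto
  qed
  then have "sorted_wrt (\<le>) c" unfolding c_def by (simp add: sorted_wrt_map)
  then show ?thesis using sc by blast
qed

lemma Ch_chain: "m \<in> Ch \<Longrightarrow> Complete_Partial_Order.chain (\<le>) (set m)"
  unfolding chain_def
  by (metis Ch_mono in_set_conv_nth nle_le)

lemma ext_Ch: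
  assumes "C \<subseteq> P" "Complete_Partial_Order.chain (\<le>) C"
  shows "\<exists>m\<in>Ch. C \<subseteq> set m"
proof -
  obtain c where c: "sorted_wrt (\<le>) c" "set c = C" using chain_list assms by blast
  have "\<exists>!m. sat_chain P bot top m \<and> set c \<subseteq> set m \<and> inc (set c) m"
    using c assms bot_in top_in bot_le top_ge by (intro decomp) auto
  then show ?thesis unfolding Ch_def using c by auto
qed

lemma max_chains_eq: "{C. maximal_chain P C} = set ` Ch"
proof (intro equalityI subsetI)
  fix C assume "C \<in> {C. maximal_chain P C}"
  then have C: "C \<subseteq> P" "Complete_Partial_Order.chain (\<le>) C"
    "\<not> (\<exists>D. D \<subseteq> P \<and> Complete_Partial_Order.chain (\<le>) D \<and> C \<subset> D)"
    by (auto simp: maximal_chain_def)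
  obtain m where m: "m \<in> Ch" "C \<subseteq> set m" using ext_Ch C by blast
  then have "C = set m" using C(3) Ch_sub Ch_chain by blast
  then show "C \<in> set ` Ch" using m by blast
next
  fix C assume "C \<in> set ` Ch"
  then obtain m where m: "m \<in> Ch" "C = set m" by blast
  have "\<not> (\<exists>D. D \<subseteq> P \<and> Complete_Partial_Order.chain (\<le>) D \<and> set m \<subset> D)"
  proof
    assume "\<exists>D. D \<subseteq> P \<and> Complete_Partial_Order.chain (\<le>) D \<and> set m \<subset> D"
    then obtain D where D: "D \<subseteq> P" "Complete_Partial_Order.chain (\<le>) D" "set m \<subset> D" by blast
    obtain m' where m': "m' \<in> Ch" "D \<subseteq> set m'" using ext_Ch D by blast
    have "card (set m) < card (set m')"
      using D(3) m' by (meson finite_set psubset_card_mono psubset_subset_trans)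
    then show False using Ch_card m m' by simp
  qed
  then show "C \<in> {C. maximal_chain P C}"
    using m Ch_sub Ch_chain by (auto simp: maximal_chain_def)
qed

lemma card_max: "card {C. maximal_chain P C} = card Ch"
  unfolding max_chains_eq using inj_set_Ch by (rule card_image)

end


lemma rfp_add: "ratfun_of_poly (p + r) = ratfun_of_poly p + ratfun_of_poly r"
  by (simp add: ratfun_of_poly_def)
lemma rfp_mult: "ratfun_of_poly (p * r) = ratfun_of_poly p * ratfun_of_poly r"
  by (simp add: ratfun_of_poly_def)
lemma rfp_1: "ratfun_of_poly 1 = 1"
  by (simp add: ratfun_of_poly_def One_fract_def)
lemma rfp_0: "ratfun_of_poly 0 = 0"
  by (simp add: ratfun_of_poly_def Zero_fract_def)
lemma rfp_inj: "ratfun_of_poly p = ratfun_of_poly r \<longleftrightarrow> p = r"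
  by (simp add: ratfun_of_poly_def eq_fract)
lemma rfp_pow: "ratfun_of_poly (p ^ n) = ratfun_of_poly p ^ n"
  by (induction n) (simp_all add: rfp_1 rfp_mult)
lemma rfp_sum: "ratfun_of_poly (sum f A) = (\<Sum>x\<in>A. ratfun_of_poly (f x))"
  by (induction A rule: infinite_finite_induct) (simp_all add: rfp_0 rfp_add)

lemma qvar_pow: "qvar ^ n = ratfun_of_poly (monom 1 n)"
proof -
  have "qvar = ratfun_of_poly [:0,1:]" by (simp add: qvar_def ratfun_of_poly_def)
  then show ?thesis by (simp add: rfp_pow monom_altdef)
qed

lemma qvar_pow_inj: "qvar ^ a = qvar ^ b \<longleftrightarrow> a = b"
  by (simp add: qvar_pow rfp_inj monom_eq_iff')

lemma qvar_ne0: "qvar \<noteq> 0"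
  using qvar_pow[of 1] rfp_inj[of "monom 1 1" 0] rfp_0 by auto
lemma qvar_ne1: "qvar \<noteq> 1"
  using qvar_pow_inj[of 1 0] by auto

lemma qint_ne0: "n \<ge> 1 \<Longrightarrow> qint n \<noteq> 0"
  using qvar_pow_inj[of n 0] qvar_ne1 by (auto simp: qint_def)

lemma qint_inj: "qint a = qint b \<Longrightarrow> a = b"
  using qvar_ne1 by (auto simp: qint_def qvar_pow_inj)

lemma qfact_ne0: "qfact n \<noteq> 0"
  unfolding qfact_def using qint_ne0 by (auto simp: prod_zero_iff)

lemma qfact_Suc: "qfact (Suc n) = qfact n * qint (Suc n)"
  unfolding qfact_def by simp

lemma qint_add: "qint (Suc H) + qvar ^ Suc H * qint (Suc j) = qint (j + H + 2)"
proof -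
  have ne: "qvar - 1 \<noteq> 0" using qvar_ne1 by simp
  have e: "qvar ^ (j + H + 2) = qvar ^ Suc H * qvar ^ Suc j" proof -
    have "j + H + 2 = Suc H + Suc j" by simp
    then show ?thesis by (simp only: power_add)
  qed
  have "qint (Suc H) + qvar ^ Suc H * qint (Suc j) = ((qvar ^ Suc H - 1) + qvar ^ Suc H * (qvar ^ Suc j - 1)) / (qvar - 1)"
    unfolding qint_def by (simp add: add_divide_distrib)
  also have "\<dots> = qint (j + H + 2)" unfolding qint_def e by (simp add: algebra_simps)
  finally show ?thesis .
qed



definition MS :: "nat \<Rightarrow> nat \<Rightarrow> nat multiset set" where
  "MS k H = {M. size M = k \<and> set_mset M \<subseteq> {..H}}"

definition Aq :: "nat \<Rightarrow> nat \<Rightarrow> ratfun" where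
  "Aq H j = (\<Sum>M\<in>MS j H. qvar ^ sum_mset M)"

definition Bq :: "nat \<Rightarrow> nat \<Rightarrow> ratfun" where
  "Bq H j = (\<Prod>i<H. qint (j + 1 + i))"

lemma finite_MS: "finite (MS k H)"
proof -
  have "MS k H \<subseteq> mset ` {xs. set xs \<subseteq> {..H} \<and> length xs = k}"
  proof
    fix M assume "M \<in> MS k H"
    then show "M \<in> mset ` {xs. set xs \<subseteq> {..H} \<and> length xs = k}"
      unfolding MS_def
      by (intro image_eqI[of _ _ "sorted_list_of_multiset M"]) (auto, metis mset_sorted_list_of_multiset size_mset)
  qed
  moreover have "finite {xs. set xs \<subseteq> {..H} \<and> length xs = k}"
    by (intro finite_lists_length_eq) auto
  ultimately show ?thesis by (meson finite_surj)
qed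

lemma MS_0: "MS 0 H = {{#}}"
  unfolding MS_def by auto

lemma MS_H0: "MS j 0 = {replicate_mset j 0}"
proof -
  have "M = replicate_mset (size M) 0" if "set_mset M \<subseteq> {0}" for M :: "nat multiset"
    using that by (metis atMost_0 set_mset_subset_singletonD)
  then show ?thesis unfolding MS_def by (auto split: if_splits)
qed

lemma Aq_0: "Aq H 0 = 1"
  unfolding Aq_def MS_0 by simp

lemma Aq_H0: "Aq 0 j = 1"
  unfolding Aq_def MS_H0 by simp

lemma MS_split: "MS (Suc j) (Suc H) = MS (Suc j) H \<union> add_mset (Suc H) ` MS j (Suc H)"
proof (intro equalityI subsetI)
  fix M assume M: "M \<in> MS (Suc j) (Suc H)"
  show "M \<in> MS (Suc j) H \<union> add_mset (Suc H) ` MS j (Suc H)"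
  proof (cases "Suc H \<in># M")
    case True
    then have "M = add_mset (Suc H) (M - {#Suc H#})" by simp
    moreover have "M - {#Suc H#} \<in> MS j (Suc H)" using M True
      unfolding MS_def by (auto simp: size_Diff_singleton dest: in_diffD)
    ultimately show ?thesis by blast
  next
    case False
    then have "set_mset M \<subseteq> {..H}" using M unfolding MS_def by (auto simp: le_Suc_eq)
    then show ?thesis using M unfolding MS_def by auto
  qed
next
  fix M assume "M \<in> MS (Suc j) H \<union> add_mset (Suc H) ` MS j (Suc H)"
  then show "M \<in> MS (Suc j) (Suc H)" unfolding MS_def by auto
qed

lemma Aq_rec: "Aq (Suc H) (Suc j) = Aq H (Suc j) + qvar ^ Suc H * Aq (Suc H) j"
proof -
  have disj: "MS (Suc j) H \<inter> add_mset (Suc H) ` MS j (Suc H) = {}"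
    unfolding MS_def by auto
  have "Aq (Suc H) (Suc j) = Aq H (Suc j) + (\<Sum>M\<in>add_mset (Suc H) ` MS j (Suc H). qvar ^ sum_mset M)"
    unfolding Aq_def MS_split
    by (subst sum.union_disjoint) (auto simp: finite_MS disj)
  also have "(\<Sum>M\<in>add_mset (Suc H) ` MS j (Suc H). qvar ^ sum_mset M) = qvar ^ Suc H * Aq (Suc H) j"
    unfolding Aq_def
    by (subst sum.reindex) (auto simp: inj_on_def power_add sum_distrib_left mult.assoc)
  finally show ?thesis .
qed

lemma qfact_lessThan: "qfact n = (\<Prod>i<n. qint (Suc i))"
  by (induction n) (simp_all add: qfact_Suc, simp add: qfact_def)

lemma Aq_closed: "qfact H * Aq H j = Bq H j"
proof (induction H arbitrary: j)
  case 0
  then show ?case by (simp add: Aq_H0 Bq_def qfact_def)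
next
  case (Suc H)
  note IH = Suc.IH
  show ?case
  proof (induction j)
    case 0
    then show ?case by (simp add: Aq_0 Bq_def qfact_lessThan)
  next
    case (Suc j)
    have "qfact (Suc H) * Aq (Suc H) (Suc j) = qint (Suc H) * (qfact H * Aq H (Suc j)) + qvar ^ Suc H * (qfact (Suc H) * Aq (Suc H) j)"
      by (simp add: Aq_rec qfact_Suc algebra_simps)
    also have "\<dots> = qint (Suc H) * Bq H (Suc j) + qvar ^ Suc H * Bq (Suc H) j"
      using IH Suc.IH by simp
    also have "\<dots> = (qint (Suc H) + qvar ^ Suc H * qint (Suc j)) * (\<Prod>i<H. qint (j + 2 + i))"
      unfolding Bq_def prod.lessThan_Suc_shift by (simp add: algebra_simps)
    also have "\<dots> = Bq (Suc H) (Suc j)"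
      unfolding qint_add Bq_def by (simp add: algebra_simps)
    finally show ?case .
  qed
qed



lemma mset_set_sub: "finite D \<Longrightarrow> D \<subseteq> set_mset M \<Longrightarrow> mset_set D \<subseteq># M"
  unfolding subseteq_mset_def
proof
  fix a assume "finite D" "D \<subseteq> set_mset M"
  then show "count (mset_set D) a \<le> count M a"
    by (cases "a \<in> D") (auto simp: count_mset_set Suc_le_eq)
qed

lemma sum_mset_set: "sum_mset (mset_set (D::nat set)) = \<Sum>D"
  using sum_unfold_sum_mset[of "\<lambda>x. x" D] by simp

lemma Aq_D:
  assumes D: "finite D" "D \<subseteq> {..H}"
  shows "(\<Sum>M\<in>{M\<in>MS k H. D \<subseteq> set_mset M}. qvar ^ sum_mset M)
     = (if card D \<le> k then qvar ^ (\<Sum>D) * Aq H (k - card D) else 0)"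
proof (cases "card D \<le> k")
  case True
  have eq: "{M\<in>MS k H. D \<subseteq> set_mset M} = (\<lambda>M'. M' + mset_set D) ` MS (k - card D) H"
  proof (intro equalityI subsetI)
    fix M assume M: "M \<in> {M\<in>MS k H. D \<subseteq> set_mset M}"
    then have sub: "mset_set D \<subseteq># M" using mset_set_sub D by auto
    have "M = (M - mset_set D) + mset_set D" using sub by simp
    moreover have "M - mset_set D \<in> MS (k - card D) H"
      using M sub unfolding MS_def
      by (auto simp: size_Diff_submset dest: in_diffD)
    ultimately show "M \<in> (\<lambda>M'. M' + mset_set D) ` MS (k - card D) H" by blast
  next
    fix M assume "M \<in> (\<lambda>M'. M' + mset_set D) ` MS (k - card D) H"
    then show "M \<in> {M\<in>MS k H. D \<subseteq> set_mset M}"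
      using True D unfolding MS_def by auto
  qed
  show ?thesis
    unfolding eq using True
    by (subst sum.reindex) (auto simp: inj_on_def Aq_def sum_mset_set power_add sum_distrib_left mult.commute)
next
  case False
  have "{M\<in>MS k H. D \<subseteq> set_mset M} = {}"
  proof (rule ccontr)
    assume "{M\<in>MS k H. D \<subseteq> set_mset M} \<noteq> {}"
    then obtain M where M: "M \<in> MS k H" "D \<subseteq> set_mset M" by blast
    then have "size (mset_set D) \<le> size M" using mset_set_sub D size_mset_mono by blast
    then show False using M False unfolding MS_def by simp
  qed
  then show ?thesis using False by (simp only: sum.empty) simp
qed



definition Gp :: "nat \<Rightarrow> nat \<Rightarrow> ratfun poly" where
  "Gp H d = smult (inverse (qfact H))
     (\<Prod>i<H. [: (qvar ^ i / qvar ^ d - 1) / (qvar - 1), qvar ^ i / qvar ^ d :])"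

lemma factor_eval:
  "poly [: (qvar ^ i / qvar ^ d - 1) / (qvar - 1), qvar ^ i / qvar ^ d :] (qint n)
    = (qvar ^ (n + i) / qvar ^ d - 1) / (qvar - 1)"
proof -
  have ne: "qvar - 1 \<noteq> 0" using qvar_ne1 by simp
  have ne2: "qvar ^ d \<noteq> 0" using qvar_ne0 by simp
  define r where "r = qvar ^ i / qvar ^ d"
  have e: "qvar ^ (n + i) / qvar ^ d = qvar ^ n * r" unfolding r_def by (simp add: power_add)
  have "poly [: (r - 1) / (qvar - 1), r :] (qint n) = (r - 1) / (qvar - 1) + (qvar ^ n - 1) / (qvar - 1) * r"
    unfolding qint_def by simp
  also have "\<dots> = ((r - 1) + (qvar ^ n - 1) * r) / (qvar - 1)"
    by (simp add: add_divide_distrib)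
  also have "\<dots> = (qvar ^ n * r - 1) / (qvar - 1)" by (simp add: algebra_simps)
  finally show ?thesis unfolding e r_def .
qed

lemma poly_Gp:
  assumes "n \<ge> 1" "d \<le> H"
  shows "poly (Gp H d) (qint n) = (if d \<le> n - 1 then Aq H (n - 1 - d) else 0)"
proof (cases "d \<le> n - 1")
  case True
  have "poly (Gp H d) (qint n) = inverse (qfact H) * (\<Prod>i<H. (qvar ^ (n + i) / qvar ^ d - 1) / (qvar - 1))"
    unfolding Gp_def poly_smult poly_prod by (simp only: factor_eval)
  also have "(\<Prod>i<H. (qvar ^ (n + i) / qvar ^ d - 1) / (qvar - 1)) = Bq H (n - 1 - d)"
    unfolding Bq_def
  proof (rule prod.cong[OF refl])
    fix i assume "i \<in> {..<H}"
    have "qvar ^ (n + i) / qvar ^ d = qvar ^ (n + i - d)"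
      using True qvar_ne0 by (simp add: power_diff)
    moreover have "n + i - d = n - 1 - d + 1 + i" using True assms by simp
    ultimately show "(qvar ^ (n + i) / qvar ^ d - 1) / (qvar - 1) = qint (n - 1 - d + 1 + i)"
      unfolding qint_def by simp
  qed
  also have "inverse (qfact H) * Bq H (n - 1 - d) = Aq H (n - 1 - d)"
    using Aq_closed[of H "n - 1 - d"] qfact_ne0[of H] by (simp add: field_simps)
  finally show ?thesis using True by simp
next
  case False
  have iH: "d - n \<in> {..<H}" using False assms by auto
  have "(qvar ^ (n + (d - n)) / qvar ^ d - 1) / (qvar - 1) = 0"
    using False qvar_ne0 by simp
  then have "(\<Prod>i<H. (qvar ^ (n + i) / qvar ^ d - 1) / (qvar - 1)) = 0"
    using iH by (intro prod_zero) auto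
  then show ?thesis unfolding Gp_def poly_smult poly_prod using False by (simp only: factor_eval) simp
qed

lemma coeff_prod_lin:
  "degree (\<Prod>i<H. [: a i, b i :]) \<le> H \<and> coeff (\<Prod>i<H. [: a i, b i :]) H = (\<Prod>i<H. b i)"
proof (induction H)
  case 0
  then show ?case by simp
next
  case (Suc H)
  let ?p = "\<Prod>i<H. [: a i, b i :]"
  have eq: "(\<Prod>i<Suc H. [: a i, b i :]) = smult (a H) ?p + pCons 0 (smult (b H) ?p)"
    by (simp add: mult_pCons_right)
  have "degree (smult (a H) ?p + pCons 0 (smult (b H) ?p)) \<le> Suc H"
    using Suc.IH by (intro degree_add_le) (auto simp: degree_pCons_le le_SucI intro: order.trans[OF degree_smult_le])
  moreover have "coeff ?p (Suc H) = 0" using Suc.IH by (simp add: coeff_eq_0)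
  ultimately show ?case unfolding eq using Suc.IH by (simp add: mult.commute)
qed

lemma coeff_Gp: "coeff (Gp H d) H = inverse (qfact H) * (\<Prod>i<H. qvar ^ i / qvar ^ d)"
  unfolding Gp_def coeff_smult by (simp only: coeff_prod_lin[THEN conjunct2])

lemma prod_pow: "(\<Prod>i<H. qvar ^ i / qvar ^ d) = qvar ^ (\<Sum>i<H. i) / qvar ^ (d * H)"
  by (induction H) (simp_all add: power_add field_simps qvar_ne0)



context rp
begin

definition Dm :: "'a list \<Rightarrow> nat set" where
  "Dm m = {i + 1 | i. i + 2 < length m \<and> \<not> lhd (lam (m ! i) (m ! (i + 1))) (lam (m ! (i + 1)) (m ! (i + 2)))}"

lemma Dm_sub: "m \<in> Ch \<Longrightarrow> Dm m \<subseteq> {1..rk top}"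
  unfolding Dm_def using Ch_len by auto

lemma Dm_fin: "m \<in> Ch \<Longrightarrow> finite (Dm m)"
  using Dm_sub finite_subset by blast

lemma finite_mc: "finite (multichains P k)"
proof -
  have "multichains P k \<subseteq> {xs. set xs \<subseteq> P \<and> length xs = k}"
    unfolding multichains_def by auto
  moreover have "finite {xs. set xs \<subseteq> P \<and> length xs = k}"
    using fin by (rule finite_lists_length_eq)
  ultimately show ?thesis by (rule finite_subset)
qed

lemma part:
  "(\<Sum>c\<in>multichains P k. f c) =
   (\<Sum>m\<in>Ch. \<Sum>c\<in>{c\<in>multichains P k. set c \<subseteq> set m \<and> inc (set c) m}. f c)"
proof -
  have uq: "\<exists>!m. m \<in> Ch \<and> set c \<subseteq> set m \<and> inc (set c) m" if c: "c \<in> multichains P k" for c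
  proof -
    have "\<exists>!m. sat_chain P bot top m \<and> set c \<subseteq> set m \<and> inc (set c) m"
      using c bot_in top_in bot_le top_ge unfolding multichains_def
      by (intro decomp) auto
    then show ?thesis unfolding Ch_def by simp
  qed
  have "(\<Sum>m\<in>Ch. \<Sum>c\<in>{c\<in>multichains P k. set c \<subseteq> set m \<and> inc (set c) m}. f c)
      = (\<Sum>m\<in>Ch. \<Sum>c\<in>multichains P k. if set c \<subseteq> set m \<and> inc (set c) m then f c else 0)"
    using finite_mc by (simp add: sum.inter_filter)
  also have "\<dots> = (\<Sum>c\<in>multichains P k. \<Sum>m\<in>Ch. if set c \<subseteq> set m \<and> inc (set c) m then f c else 0)"
    by (rule sum.swap)
  also have "\<dots> = (\<Sum>c\<in>multichains P k. f c)"
  proof (rule sum.cong[OF refl])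
    fix c assume c: "c \<in> multichains P k"
    obtain m0 where m0: "m0 \<in> Ch" "set c \<subseteq> set m0" "inc (set c) m0"
      and u: "\<And>m. m \<in> Ch \<Longrightarrow> set c \<subseteq> set m \<Longrightarrow> inc (set c) m \<Longrightarrow> m = m0"
      using uq[OF c] by blast
    have "(\<Sum>m\<in>Ch. if set c \<subseteq> set m \<and> inc (set c) m then f c else 0)
        = (\<Sum>m\<in>Ch. if m = m0 then f c else 0)"
    proof (rule sum.cong[OF refl])
      fix m assume mC: "m \<in> Ch"
      have "(set c \<subseteq> set m \<and> inc (set c) m) = (m = m0)" using u[OF mC] m0 by blast
      then show "(if set c \<subseteq> set m \<and> inc (set c) m then f c else 0) = (if m = m0 then f c else 0)"
        by simp
    qed
    also have "\<dots> = f c" using m0 finite_Ch by simp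
    finally show "(\<Sum>m\<in>Ch. if set c \<subseteq> set m \<and> inc (set c) m then f c else 0) = f c" .
  qed
  finally show ?thesis by simp
qed

lemma C1:
  assumes m: "m \<in> Ch"
  shows "(\<Sum>c\<in>{c\<in>multichains P k. set c \<subseteq> set m \<and> inc (set c) m}. qvar ^ (\<Sum>e\<leftarrow>c. rk e))
       = (\<Sum>M\<in>{M\<in>MS k (rk top). Dm m \<subseteq> set_mset M}. qvar ^ sum_mset M)"
proof -
  let ?X = "{c\<in>multichains P k. set c \<subseteq> set m \<and> inc (set c) m}"
  let ?Y = "{M\<in>MS k (rk top). Dm m \<subseteq> set_mset M}"
  let ?h = "\<lambda>c. mset (map rk c)"
  let ?h' = "\<lambda>M. map (\<lambda>i. m ! i) (sorted_list_of_multiset M)"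
  have len: "length m = rk top + 1" using Ch_len m by simp
  have bij: "bij_betw ?h ?X ?Y"
  proof (rule bij_betw_byWitness)
    show "\<forall>c\<in>?X. ?h' (?h c) = c"
    proof
      fix c assume c: "c \<in> ?X"
      have s: "sorted_wrt (\<le>) c" and "set c \<subseteq> set m" using c by (auto simp: multichains_def)
      moreover have "set m \<subseteq> P" using Ch_sub m by simp
      ultimately have sub: "set c \<subseteq> P" by blast
      have "sorted (map rk c)"
        unfolding sorted_wrt_map
        by (rule sorted_wrt_mono_rel[OF _ s]) (use sub rk_mono in blast)
      then have e: "sorted_list_of_multiset (mset (map rk c)) = map rk c"
        by (simp only: sorted_list_of_multiset_mset sorted_sort_id)
      have "?h' (?h c) = map (\<lambda>x. m ! rk x) c"
        by (simp only: e map_map o_def)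
      also have "\<dots> = c" using Ch_nth_rk m c by (auto intro: map_idI)
      finally show "?h' (?h c) = c" .
    qed
    show "\<forall>M\<in>?Y. ?h (?h' M) = M"
    proof
      fix M assume M: "M \<in> ?Y"
      have "map rk (?h' M) = map (\<lambda>i. i) (sorted_list_of_multiset M)"
        unfolding map_map
      proof (rule map_cong[OF refl])
        fix i assume "i \<in> set (sorted_list_of_multiset M)"
        then have "i < length m" using M len unfolding MS_def by auto
        then show "(rk \<circ> (!) m) i = i" using Ch_rk m by simp
      qed
      then show "?h (?h' M) = M" by simp
    qed
    show "?h ` ?X \<subseteq> ?Y"
    proof
      fix M assume "M \<in> ?h ` ?X"
      then obtain c where c: "c \<in> ?X" "M = ?h c" by blast
      have "size M = k" using c by (simp add: multichains_def)
      moreover have "set_mset M \<subseteq> {..rk top}" using c Ch_rk_le m by auto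
      moreover have "Dm m \<subseteq> set_mset M"
      proof
        fix j assume "j \<in> Dm m"
        then obtain i where i: "j = i + 1" "i + 2 < length m"
          "\<not> lhd (lam (m ! i) (m ! (i + 1))) (lam (m ! (i + 1)) (m ! (i + 2)))"
          unfolding Dm_def by blast
        have "inc (set c) m" using c(1) by simp
        then have "m ! (i + 1) \<in> set c \<or> lhd (lam (m ! i) (m ! (i + 1))) (lam (m ! (i + 1)) (m ! (i + 2)))"
          using i(2) unfolding incr_nth by blast
        then have "m ! (i + 1) \<in> set c" using i(3) by blast
        moreover have "rk (m ! (i + 1)) = j" using i Ch_rk m by simp
        ultimately have "j \<in> rk ` set c" by (metis image_eqI)
        then show "j \<in> set_mset M" using c(2) by simp
      qed
      ultimately show "M \<in> ?Y" unfolding MS_def by blast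
    qed
    show "?h' ` ?Y \<subseteq> ?X"
    proof
      fix c assume "c \<in> ?h' ` ?Y"
      then obtain M where M: "M \<in> ?Y" "c = ?h' M" by blast
      have lt: "i < length m" if "i \<in> set (sorted_list_of_multiset M)" for i
        using that M len unfolding MS_def by auto
      have sc: "set c \<subseteq> set m" using M lt by auto
      have "length c = k" using M unfolding MS_def
        by (simp, metis mset_sorted_list_of_multiset size_mset)
      moreover have "set c \<subseteq> P" using sc Ch_sub m by blast
      moreover have "sorted_wrt (\<le>) c"
      proof -
        have "sorted (sorted_list_of_multiset M)" by simp
        then have "sorted_wrt (\<lambda>i j. m ! i \<le> m ! j) (sorted_list_of_multiset M)"
          by (rule sorted_wrt_mono_rel[rotated]) (use lt Ch_mono m in auto)
        then show ?thesis using M by (simp add: sorted_wrt_map)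
      qed
      moreover have "inc (set c) m"
        unfolding incr_nth
      proof (intro allI impI)
        fix i assume i: "i + 2 < length m"
        show "m ! (i + 1) \<in> set c \<or> lhd (lam (m ! i) (m ! (i + 1))) (lam (m ! (i + 1)) (m ! (i + 2)))"
        proof (cases "lhd (lam (m ! i) (m ! (i + 1))) (lam (m ! (i + 1)) (m ! (i + 2)))")
          case False
          then have "i + 1 \<in> Dm m" unfolding Dm_def using i by blast
          then have "i + 1 \<in> set (sorted_list_of_multiset M)" using M by auto
          then have "m ! (i + 1) \<in> set c" unfolding M(2) by simp
          then show ?thesis by blast
        qed simp
      qed
      ultimately show "c \<in> ?X" using sc unfolding multichains_def by blast
    qed
  qed
  have "(\<Sum>c\<in>?X. qvar ^ (\<Sum>e\<leftarrow>c. rk e)) = (\<Sum>c\<in>?X. qvar ^ sum_mset (?h c))"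
    by (rule sum.cong[OF refl]) (simp only: sum_mset_sum_list)
  also have "\<dots> = (\<Sum>M\<in>?Y. qvar ^ sum_mset M)"
    by (rule sum.reindex_bij_betw[OF bij])
  finally show ?thesis .
qed

definition Zp :: "ratfun poly" where
  "Zp = (\<Sum>m\<in>Ch. smult (qvar ^ (\<Sum>(Dm m))) (Gp (rk top) (card (Dm m))))"

lemma Z_eval:
  assumes n: "n \<ge> 1"
  shows "(\<Sum>c\<in>multichains P (n - 1). qvar ^ (\<Sum>e\<leftarrow>c. rk e)) = poly Zp (qint n)"
proof -
  have "(\<Sum>c\<in>multichains P (n - 1). qvar ^ (\<Sum>e\<leftarrow>c. rk e))
     = (\<Sum>m\<in>Ch. \<Sum>M\<in>{M\<in>MS (n - 1) (rk top). Dm m \<subseteq> set_mset M}. qvar ^ sum_mset M)"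
    unfolding part by (rule sum.cong[OF refl]) (rule C1)
  also have "\<dots> = (\<Sum>m\<in>Ch. qvar ^ (\<Sum>(Dm m)) * poly (Gp (rk top) (card (Dm m))) (qint n))"
  proof (rule sum.cong[OF refl])
    fix m assume m: "m \<in> Ch"
    have D: "finite (Dm m)" "Dm m \<subseteq> {..rk top}" using Dm_sub[OF m] Dm_fin[OF m] by auto
    have "card (Dm m) \<le> card {1..rk top}" using Dm_sub[OF m] by (intro card_mono) auto
    then have cd: "card (Dm m) \<le> rk top" by simp
    show "(\<Sum>M\<in>{M\<in>MS (n - 1) (rk top). Dm m \<subseteq> set_mset M}. qvar ^ sum_mset M)
        = qvar ^ (\<Sum>(Dm m)) * poly (Gp (rk top) (card (Dm m))) (qint n)"
      unfolding Aq_D[OF D] poly_Gp[OF n cd] by simp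
  qed
  also have "\<dots> = poly Zp (qint n)"
    unfolding Zp_def by (simp add: poly_sum)
  finally show ?thesis .
qed

end


lemma the_Z:
  assumes Z: "\<forall>n\<ge>2. poly Z (qint n) = F n"
  shows "(THE Z. \<forall>n\<ge>2. poly Z (qint n) = F n) = Z"
proof (rule the_equality)
  show "\<forall>n\<ge>2. poly Z (qint n) = F n" by (rule Z)
next
  fix Z' assume Z': "\<forall>n\<ge>2. poly Z' (qint n) = F n"
  show "Z' = Z"
  proof (rule ccontr)
    assume "Z' \<noteq> Z"
    then have ne: "Z' - Z \<noteq> 0" by simp
    have "qint ` {2..} \<subseteq> {x. poly (Z' - Z) x = 0}" using Z Z' by auto
    moreover have "finite {x. poly (Z' - Z) x = 0}" using poly_roots_finite[OF ne] .
    ultimately have "finite (qint ` {2::nat..})" by (rule finite_subset)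
    moreover have "inj_on qint {2::nat..}" using qint_inj by (auto simp: inj_on_def)
    ultimately have "finite {2::nat..}" using finite_imageD by blast
    then show False using infinite_Ici by blast
  qed
qed

lemma exp_ok:
  assumes D: "finite D" "D \<subseteq> {1..H}"
  shows "card D * H \<le> \<Sum>D + (\<Sum>i<H. i)"
proof -
  have "(\<Sum>x\<in>D. x + (H - x)) = (\<Sum>x\<in>D. H)" using D by (intro sum.cong) auto
  then have "card D * H = (\<Sum>x\<in>D. x + (H - x))" by simp
  also have "\<dots> = \<Sum>D + (\<Sum>x\<in>D. H - x)" by (simp add: sum.distrib)
  also have "(\<Sum>x\<in>D. H - x) = (\<Sum>y\<in>(\<lambda>x. H - x) ` D. y)"
  proof (rule sum.reindex[symmetric, unfolded comp_def])
    show "inj_on (\<lambda>x. H - x) D"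
    proof (rule inj_onI)
      fix x y assume "x \<in> D" "y \<in> D" "H - x = H - y"
      moreover have "x \<le> H" "y \<le> H" using D \<open>x \<in> D\<close> \<open>y \<in> D\<close> by auto
      ultimately show "x = y" by linarith
    qed
  qed
  also have "\<dots> \<le> (\<Sum>i<H. i)"
    by (rule sum_mono2) (use D in auto)
  finally show ?thesis by simp
qed

lemma map_poly_of_int_sum:
  "map_poly (of_int :: int \<Rightarrow> rat) (sum g A) = (\<Sum>x\<in>A. map_poly of_int (g x))"
  by (rule poly_eqI) (simp add: coeff_map_poly coeff_sum)

context rp
begin

lemma main:
  "\<exists>f :: int poly. (\<forall>i. coeff f i \<ge> 0) \<and>
     qfact (rk top) * coeff (qZeta P rk) (rk top) = ratfun_of_poly (map_poly of_int f) \<and>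
     poly f 1 = int (card {C. maximal_chain P C})"
proof -
  define H where "H = rk top"
  define e where "e m = \<Sum>(Dm m) + (\<Sum>i<H. i) - card (Dm m) * H" for m
  define f :: "int poly" where "f = (\<Sum>m\<in>Ch. monom 1 (e m))"
  have Zq: "qZeta P rk = Zp"
    unfolding qZeta_def by (rule the_Z) (use Z_eval in simp)
  have "qfact H * coeff Zp H = (\<Sum>m\<in>Ch. qfact H * (qvar ^ \<Sum>(Dm m) * coeff (Gp H (card (Dm m))) H))"
    unfolding Zp_def H_def by (simp add: coeff_sum sum_distrib_left)
  also have "\<dots> = (\<Sum>m\<in>Ch. qvar ^ e m)"
  proof (rule sum.cong[OF refl])
    fix m assume m: "m \<in> Ch"
    have le: "card (Dm m) * H \<le> \<Sum>(Dm m) + (\<Sum>i<H. i)"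
      using exp_ok Dm_fin[OF m] Dm_sub[OF m] H_def by simp
    have "qfact H * (qvar ^ \<Sum>(Dm m) * coeff (Gp H (card (Dm m))) H)
        = qvar ^ (\<Sum>(Dm m) + (\<Sum>i<H. i)) / qvar ^ (card (Dm m) * H)"
      unfolding coeff_Gp prod_pow using qfact_ne0[of H] by (simp add: field_simps power_add)
    also have "\<dots> = qvar ^ e m"
      unfolding e_def using le qvar_ne0 by (simp add: power_diff)
    finally show "qfact H * (qvar ^ \<Sum>(Dm m) * coeff (Gp H (card (Dm m))) H) = qvar ^ e m" .
  qed
  also have "\<dots> = ratfun_of_poly (map_poly of_int f)"
    unfolding f_def map_poly_of_int_sum rfp_sum
    by (simp add: map_poly_monom qvar_pow)
  finally have c: "qfact (rk top) * coeff (qZeta P rk) (rk top) = ratfun_of_poly (map_poly of_int f)"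
    unfolding Zq H_def .
  have nn: "\<forall>i. coeff f i \<ge> 0"
    unfolding f_def by (auto simp: coeff_sum coeff_monom intro: sum_nonneg)
  have "poly f 1 = int (card Ch)"
    unfolding f_def by (simp add: poly_sum poly_monom)
  then show ?thesis using nn c card_max by auto
qed

end

theorem mainTheorem7:
  fixes P :: "'a::order set" and bot top :: 'a and rk :: "'a \<Rightarrow> nat"
    and lhd :: "'b \<Rightarrow> 'b \<Rightarrow> bool" and lam :: "'a \<Rightarrow> 'a \<Rightarrow> 'b"
  assumes fin: "finite P"
    and bot: "bot \<in> P" "\<forall>x\<in>P. bot \<le> x"
    and top: "top \<in> P" "\<forall>x\<in>P. x \<le> top"
    and rk0: "rk bot = 0"
    and rk_cov: "\<forall>x y. covers P x y \<longrightarrow> rk y = rk x + 1"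
    and R: "R_labelling P lhd lam"
  shows "\<exists>f :: int poly. (\<forall>i. coeff f i \<ge> 0) \<and>
           qfact (rk top) * coeff (qZeta P rk) (rk top) = ratfun_of_poly (map_poly of_int f) \<and>
           poly f 1 = int (card {C. maximal_chain P C})"
proof -
  interpret rp P bot top rk lhd lam
    using assms by unfold_locales auto
  show ?thesis by (rule main)
qed



end
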